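(* Let $c>0$ and $v\in\mathbb{R}^d$. For $i=1,\dots,m$ let $u_i\in\mathbb{R}^d$ and let $p_i$ be a probability density on $\mathbb{R}^d$ of the form $p_i(y)=\phi_i(\|y-u_i\|)$ for some function $\phi_i$. Suppose $v=\sum_{i=1}^m w_iu_i$ with $w_i\ge0$, $\sum_{i=1}^m w_i=1$, and $\langle u_i,v\rangle\ge0$ for all $i$. Let $\xi$ have the zero-mean mixture density $p'(\xi)=\sum_{i=1}^m w_i\,p_i(\xi+v)$ (i.e. $v+\xi$ has density $\sum_i w_ip_i$), and let $g=\mathrm{clip}(v+\xi,c)$. Then $$\mathbb{E}_{\xi\sim p'}[\langle v,g\rangle]\ge\|v\|\sum_{i=1}^m w_i\min\left(\|u_i\|,\frac34c\right)\cos(v,u_i)\,\mathbb{P}_{y\sim p_i}\left(\|y-u_i\|<\frac c4\right)\ge0.$$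
   Context: For $g\in\mathbb{R}^d$ and $c>0$, $\mathrm{clip}(g,c)=g\cdot\min\left(1,\frac{c}{\|g\|}\right)$ (with $\mathrm{clip}(0,c)=0$). $\cos(a,b)=\langle a,b\rangle/(\|a\|\|b\|)$ (terms in which $a$ or $b$ is zero are taken to be $0$). In the paper $v$ is the true gradient $\nabla f(x_t)$. *)

theory Defs
  imports "HOL-Analysis.Analysis"
begin

definition clip :: "'a::real_normed_vector \<Rightarrow> real \<Rightarrow> 'a" where
  "clip g c = (if g = 0 then 0 else min 1 (c / norm g) *\<^sub>R g)"

definition vcos :: "'a::real_inner \<Rightarrow> 'a \<Rightarrow> real" where
  "vcos a b = (if a = 0 \<or> b = 0 then 0 else inner a b / (norm a * norm b))"

end

theory Submission
  imports Defs
begin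


lemma emeasure_cball_transl:
  fixes x :: "'a::euclidean_space"
  shows "emeasure lborel (cball x r) = emeasure lborel (cball (0::'a) r)"
proof -
  have "emeasure lborel (cball x r) = emeasure (distr lborel borel ((+) x)) (cball x r)"
    by (simp add: lborel_distr_plus)
  also have "\<dots> = emeasure lborel ((+) x -` cball x r)"
    by (subst emeasure_distr) auto
  also have "(+) x -` cball x r = cball 0 r"
    by (auto simp: dist_norm)
  finally show ?thesis .
qed

lemma isometry_emeasure_open:
  fixes H :: "'a::euclidean_space \<Rightarrow> 'a"
  assumes lin: "linear H" and inv: "\<And>x. H (H x) = x" and nrm: "\<And>x. norm (H x) = norm x"
    and U: "open U"
  shows "emeasure lborel (H ` U) = emeasure lborel U"
proof -
  define K where "K = {(x, r::real). 0 < r \<and> cball x r \<subseteq> U}"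
  have cov: "\<exists>i. i \<in> K \<and> x \<in> cball (fst i) (snd i) \<and> snd i < d" if "x \<in> U" "0 < d" for x d
  proof -
    obtain e where e: "e > 0" "cball x e \<subseteq> U" using U \<open>x \<in> U\<close> open_contains_cball by blast
    show ?thesis
      apply (rule exI[of _ "(x, min e (d/2))"])
      using e that by (auto simp: K_def)
  qed
  obtain C where C: "countable C" "C \<subseteq> K"
     and pw: "pairwise (\<lambda>i j. disjnt (cball (fst i) (snd i)) (cball (fst j) (snd j))) C"
     and neg: "negligible(U - (\<Union>i \<in> C. cball (fst i) (snd i)))"
  proof (rule Vitali_covering_theorem_cballs[of K snd U fst])
    show "\<And>i. i \<in> K \<Longrightarrow> 0 < snd i" by (auto simp: K_def)
    show "\<And>x d. x \<in> U \<Longrightarrow> 0 < d \<Longrightarrow> \<exists>i. i \<in> K \<and> x \<in> cball (fst i) (snd i) \<and> snd i < d"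
      by (rule cov)
  qed
  define B where "B i = cball (fst i) (snd i)" for i :: "'a \<times> real"
  define V where "V = (\<Union>i \<in> C. B i)"
  define N where "N = U - V"
  have HC: "continuous_on UNIV H"
    using lin linear_continuous_on linear_conv_bounded_linear by blast
  have Hm[measurable]: "H \<in> borel_measurable borel"
    using HC borel_measurable_continuous_onI by blast
  have injH: "inj H" by (metis inv injI)
  have Hiv: "H ` X = H -` X" for X
  proof
    show "H ` X \<subseteq> H -` X" using inv by auto
    show "H -` X \<subseteq> H ` X"
    proof
      fix x assume "x \<in> H -` X"
      then have "H x \<in> X" by simp
      then show "x \<in> H ` X" using inv[of x] by (metis image_eqI)
    qed
  qed
  have Vsub: "V \<subseteq> U"
  proof
    fix y assume "y \<in> V"
    then obtain i where i: "i \<in> C" "y \<in> cball (fst i) (snd i)" by (auto simp: V_def B_def)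
    then have "i \<in> K" using C(2) by blast
    then have "cball (fst i) (snd i) \<subseteq> U" by (cases i) (simp add: K_def)
    then show "y \<in> U" using i by blast
  qed
  have Vm: "V \<in> sets borel" unfolding V_def B_def
    using C(1) by (intro sets.countable_UN'') auto
  have Nm: "N \<in> sets borel" using U Vm by (auto simp: N_def)
  have disj: "disjoint_family_on B C"
    using pw unfolding disjoint_family_on_def pairwise_def disjnt_def B_def by blast
  have N0: "emeasure lborel N = 0"
  proof -
    have "negligible N" using neg by (simp add: N_def V_def B_def)
    then have "N \<in> null_sets lebesgue" by (metis negligible_iff_null_sets)
    then have "N \<in> null_sets lborel" using null_sets_completion_iff Nm by (metis sets_lborel)
    then show ?thesis by auto
  qed
  have HBeq: "H ` B i = cball (H (fst i)) (snd i)" for i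
  proof
    show "H ` B i \<subseteq> cball (H (fst i)) (snd i)"
      by (auto simp: B_def dist_norm linear_diff[OF lin, symmetric] nrm)
    show "cball (H (fst i)) (snd i) \<subseteq> H ` B i"
    proof
      fix y assume y: "y \<in> cball (H (fst i)) (snd i)"
      have "H y \<in> B i" using y
        by (simp add: B_def dist_norm) (metis inv linear_diff[OF lin] nrm)
      then show "y \<in> H ` B i" by (metis inv image_eqI)
    qed
  qed
  have HN0: "emeasure lborel (H ` N) = 0"
  proof -
    have "negligible N" using neg by (simp add: N_def V_def B_def)
    then have negHN: "negligible (H ` N)"
      apply (rule negligible_locally_Lipschitz_image[where f=H, OF order_refl])
      apply (rule_tac x=UNIV in exI, rule_tac x=1 in exI)
      by (simp add: linear_diff[OF lin, symmetric] nrm)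
    have "H ` N = H -` N" by (rule Hiv)
    then have "H ` N \<in> sets borel" using measurable_sets[OF Hm Nm] by simp
    then have "H ` N \<in> null_sets lborel" using negHN negligible_iff_null_sets null_sets_completion_iff
      by (metis sets_lborel)
    then show ?thesis by auto
  qed
  have "emeasure lborel U = emeasure lborel V + emeasure lborel N"
    using Vsub Vm Nm by (subst plus_emeasure) (auto simp: N_def intro: arg_cong[where f="emeasure lborel"])
  also have "emeasure lborel V = (\<integral>\<^sup>+i. emeasure lborel (B i) \<partial>count_space C)"
    unfolding V_def using C(1) disj by (intro emeasure_UN_countable) (auto simp: B_def)
  finally have eU: "emeasure lborel U = (\<integral>\<^sup>+i. emeasure lborel (B i) \<partial>count_space C)"
    using N0 by simp
  have HU: "H ` U = (\<Union>i\<in>C. H ` B i) \<union> H ` N"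
  proof -
    have "U = V \<union> N" using Vsub by (auto simp: N_def)
    then have "H ` U = H ` V \<union> H ` N" by (metis image_Un)
    then show ?thesis by (simp add: V_def image_UN)
  qed
  have "emeasure lborel (H ` U) = emeasure lborel (\<Union>i\<in>C. H ` B i) + emeasure lborel (H ` N)"
  proof -
    have "(\<Union>i\<in>C. H ` B i) \<inter> H ` N = {}" using injH by (auto simp: N_def V_def inj_eq)
    moreover have "(\<Union>i\<in>C. H ` B i) \<in> sets borel" using C(1) HBeq
      by (intro sets.countable_UN'') auto
    moreover have "H ` N = H -` N" by (rule Hiv)
    moreover have "H -` N \<in> sets borel" using measurable_sets[OF Hm Nm] by simp
    ultimately show ?thesis unfolding HU
      by (subst plus_emeasure) auto
  qed
  also have "emeasure lborel (\<Union>i\<in>C. H ` B i) = (\<integral>\<^sup>+i. emeasure lborel (H ` B i) \<partial>count_space C)"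
  proof (rule emeasure_UN_countable)
    show "disjoint_family_on (\<lambda>i. H ` B i) C" using disj unfolding disjoint_family_on_def
      by (metis image_Int[OF injH] image_empty)
  qed (use C(1) HBeq in auto)
  also have "\<dots> = (\<integral>\<^sup>+i. emeasure lborel (B i) \<partial>count_space C)"
  proof (intro nn_integral_cong)
    fix i
    show "emeasure lborel (H ` B i) = emeasure lborel (B i)"
      unfolding HBeq by (simp only: B_def emeasure_cball_transl[of "H (fst i)"] emeasure_cball_transl[of "fst i"])
  qed
  finally show ?thesis using eU HN0 by simp
qed



lemma gmono:
  fixes X1 X2 q c :: real
  assumes X1: "0 \<le> X1" and X12: "X1 \<le> X2" and q: "0 \<le> q" and c: "0 < c"
  shows "X1 * min 1 (c / sqrt (X1\<^sup>2 + q)) \<le> X2 * min 1 (c / sqrt (X2\<^sup>2 + q))"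
proof (cases "X1\<^sup>2 + q = 0")
  case True
  then have "X1 = 0" using X1 q by (simp add: add_nonneg_eq_0_iff)
  moreover have "0 \<le> X2 * min 1 (c / sqrt (X2\<^sup>2 + q))" using X1 X12 c q by simp
  ultimately show ?thesis by simp
next
  case False
  define N1 where "N1 = sqrt (X1\<^sup>2 + q)"
  define N2 where "N2 = sqrt (X2\<^sup>2 + q)"
  have X2: "0 \<le> X2" using X1 X12 by linarith
  have sq: "X1\<^sup>2 \<le> X2\<^sup>2" using X1 X12 by (simp add: power_mono)
  have "X1\<^sup>2 + q > 0" using False q by (simp add: add_nonneg_eq_0_iff less_le)
  then have N1p: "N1 > 0" unfolding N1_def by simp
  have N12: "N1 \<le> N2" unfolding N1_def N2_def using sq by simp
  have N2p: "N2 > 0" using N1p N12 by simp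
  have N1s: "N1\<^sup>2 = X1\<^sup>2 + q" unfolding N1_def using q by simp
  have N2s: "N2\<^sup>2 = X2\<^sup>2 + q" unfolding N2_def using q by simp
  have key: "X1 * N2 \<le> X2 * N1"
  proof (rule power2_le_imp_le)
    have "(X1 * N2)\<^sup>2 = X1\<^sup>2 * X2\<^sup>2 + X1\<^sup>2 * q" by (simp add: power_mult_distrib N2s distrib_left)
    also have "\<dots> \<le> X1\<^sup>2 * X2\<^sup>2 + X2\<^sup>2 * q" using sq q by (simp add: mult_right_mono)
    also have "\<dots> = (X2 * N1)\<^sup>2" by (simp add: power_mult_distrib N1s distrib_left mult.commute)
    finally show "(X1 * N2)\<^sup>2 \<le> (X2 * N1)\<^sup>2" .
    show "0 \<le> X2 * N1" using X2 N1p by simp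
  qed
  have "X1 / N1 = (X1 * N2) / (N1 * N2)" using N2p by simp
  also have "\<dots> \<le> (X2 * N1) / (N1 * N2)" using key N1p N2p by (intro divide_right_mono) auto
  also have "\<dots> = X2 / N2" using N1p by simp
  finally have "X1 / N1 \<le> X2 / N2" .
  then have "c * (X1 / N1) \<le> c * (X2 / N2)" using c by (intro mult_left_mono) auto
  moreover have "X1 * (c / N1) = c * (X1 / N1)" "X2 * (c / N2) = c * (X2 / N2)" by (simp_all add: ac_simps)
  ultimately have d: "X1 * (c / N1) \<le> X2 * (c / N2)" by (simp only:)
  have "X1 * min 1 (c / N1) = min X1 (X1 * (c / N1))" using X1 by (simp add: min_mult_distrib_left)
  also have "\<dots> \<le> min X2 (X2 * (c / N2))" using X12 d by (rule min.mono)
  also have "\<dots> = X2 * min 1 (c / N2)" using X2 by (simp add: min_mult_distrib_left)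
  finally show ?thesis unfolding N1_def N2_def .
qed

lemma inner_clip: "inner w (clip y c) = inner w y * min 1 (c / norm y)"
  by (simp add: clip_def)

lemma G_id:
  fixes X q c :: real
  assumes "sqrt (X\<^sup>2 + q) \<le> c" "0 \<le> q" "0 < c"
  shows "X * min 1 (c / sqrt (X\<^sup>2 + q)) = X"
proof (cases "sqrt (X\<^sup>2 + q) = 0")
  case True
  then have "X\<^sup>2 + q = 0" by simp
  then have "X = 0" using assms by (simp add: add_nonneg_eq_0_iff)
  then show ?thesis by simp
next
  case False
  moreover have "sqrt (X\<^sup>2 + q) \<ge> 0" using assms by simp
  ultimately have "sqrt (X\<^sup>2 + q) > 0" by linarith
  then have "c / sqrt (X\<^sup>2 + q) \<ge> 1" using assms by (simp add: divide_simps)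
  then show ?thesis by simp
qed

lemma pair_bound:
  fixes u z :: "'a::real_inner" and c :: real
  assumes c: "c > 0"
  shows "inner u (clip (u + z) c) + inner u (clip (u - z) c) \<ge> 0"
    and "norm z < c / 4 \<Longrightarrow> inner u (clip (u + z) c) + inner u (clip (u - z) c) \<ge> 2 * norm u * min (norm u) (3/4 * c)"
proof -
  have main: "inner u (clip (u + z) c) + inner u (clip (u - z) c) \<ge> 0 \<and>
     (norm z < c / 4 \<longrightarrow> inner u (clip (u + z) c) + inner u (clip (u - z) c) \<ge> 2 * norm u * min (norm u) (3/4 * c))"
  proof (cases "u = 0")
    case True then show ?thesis by (simp add: clip_def)
  next
    case False
    define a where "a = norm u"
    have a: "a > 0" using False by (simp add: a_def)
    define t where "t = inner u z / a"
    define q where "q = (norm z)\<^sup>2 - t\<^sup>2"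
    define G where "G X = X * min 1 (c / sqrt (X\<^sup>2 + q))" for X
    have cs: "\<bar>inner u z\<bar> \<le> a * norm z" using Cauchy_Schwarz_ineq2[of u z] by (simp add: a_def)
    have "\<bar>t\<bar> = \<bar>inner u z\<bar> / a" using a by (simp add: t_def abs_divide)
    also have "\<dots> \<le> norm z" using a cs by (simp add: pos_divide_le_eq mult.commute)
    finally have tz: "\<bar>t\<bar> \<le> norm z" .
    have "t\<^sup>2 \<le> (norm z)\<^sup>2" using power_mono[OF tz abs_ge_zero, of 2] by simp
    then have q: "q \<ge> 0" unfolding q_def by simp
    have uu: "inner u u = a\<^sup>2" by (simp add: a_def power2_norm_eq_inner)
    have ut: "inner u z = a * t" using a by (simp add: t_def)
    have nsq: "(norm (u + z))\<^sup>2 = a\<^sup>2 + 2 * inner u z + (norm z)\<^sup>2"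
      by (simp add: power2_norm_eq_inner inner_add_left inner_add_right inner_commute[of z u] a_def)
    have nsq': "(norm (u - z))\<^sup>2 = a\<^sup>2 - 2 * inner u z + (norm z)\<^sup>2"
      by (simp add: power2_norm_eq_inner inner_diff_left inner_diff_right inner_commute[of z u] a_def)
    have np: "norm (u + z) = sqrt ((a + t)\<^sup>2 + q)"
    proof -
      have "(norm (u + z))\<^sup>2 = (a + t)\<^sup>2 + q"
        unfolding nsq ut q_def by (simp add: power2_eq_square algebra_simps)
      then show ?thesis by (simp add: real_sqrt_unique)
    qed
    have nm: "norm (u - z) = sqrt ((a - t)\<^sup>2 + q)"
    proof -
      have "(norm (u - z))\<^sup>2 = (a - t)\<^sup>2 + q"
        unfolding nsq' ut q_def by (simp add: power2_eq_square algebra_simps)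
      then show ?thesis by (simp add: real_sqrt_unique)
    qed
    have iup: "inner u (u + z) = a * (a + t)"
      by (simp add: inner_add_right uu ut power2_eq_square distrib_left)
    have ium: "inner u (u - z) = a * (a - t)"
      by (simp add: inner_diff_right uu ut power2_eq_square right_diff_distrib)
    have ep: "inner u (clip (u + z) c) = a * G (a + t)"
      unfolding inner_clip G_def np[symmetric] iup by simp
    have em: "inner u (clip (u - z) c) = a * G (a - t)"
      unfolding inner_clip G_def nm[symmetric] ium by simp
    have Gmono: "G X1 \<le> G X2" if "0 \<le> X1" "X1 \<le> X2" for X1 X2
      unfolding G_def using gmono[OF that q c] .
    have Godd: "G (- X) = - G X" for X by (simp add: G_def)
    have Gnn: "G X \<ge> 0" if "X \<ge> 0" for X using Gmono[of 0 X] that by (simp add: G_def)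
    have Gsum: "G (a + t) + G (a - t) \<ge> 0"
    proof (cases "a - t < 0")
      case True
      then have "G (t - a) \<le> G (a + t)" using a by (intro Gmono) auto
      moreover have "G (a - t) = - G (t - a)" using Godd[of "t - a"] by simp
      ultimately show ?thesis by simp
    next
      case False
      show ?thesis
      proof (cases "a + t < 0")
        case True
        then have "G (- a - t) \<le> G (a - t)" using a by (intro Gmono) auto
        moreover have "G (a + t) = - G (- a - t)" using Godd[of "- a - t"] by (simp add: add.commute)
        ultimately show ?thesis by simp
      next
        case False
        then show ?thesis using \<open>\<not> a - t < 0\<close> Gnn[of "a+t"] Gnn[of "a-t"] by simp
      qed
    qed
    have bound: "G (a + t) + G (a - t) \<ge> 2 * min a (3/4 * c)" if zc: "norm z < c / 4"
    proof (cases "a < 3/4 * c")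
      case True
      have "sqrt ((a + t)\<^sup>2 + q) \<le> c" using np norm_triangle_ineq[of u z] zc True a_def by linarith
      then have "G (a + t) = a + t" unfolding G_def using G_id q c by blast
      moreover have "sqrt ((a - t)\<^sup>2 + q) \<le> c" using nm norm_triangle_ineq4[of u z] zc True a_def by linarith
      then have "G (a - t) = a - t" unfolding G_def using G_id q c by blast
      ultimately show ?thesis using True by simp
    next
      case False
      let ?b = "3/4 * c"
      have z2: "t\<^sup>2 + q = (norm z)\<^sup>2" by (simp add: q_def)
      have bnd: "sqrt ((?b + s)\<^sup>2 + q) \<le> c" if "\<bar>s\<bar> \<le> norm z" "s\<^sup>2 = t\<^sup>2" for s
      proof -
        have "(?b + s)\<^sup>2 + q = ?b\<^sup>2 + 2 * ?b * s + (norm z)\<^sup>2" using z2 that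
          by (simp add: power2_eq_square algebra_simps)
        also have "\<dots> \<le> ?b\<^sup>2 + 2 * ?b * norm z + (norm z)\<^sup>2"
        proof -
          have "s \<le> norm z" using that(1) by linarith
          then have "2 * ?b * s \<le> 2 * ?b * norm z" using c by (intro mult_left_mono) auto
          then show ?thesis by linarith
        qed
        also have "\<dots> = (?b + norm z)\<^sup>2" by (simp add: power2_eq_square algebra_simps)
        also have "\<dots> \<le> c\<^sup>2" using zc c by (intro power_mono) auto
        finally have "sqrt ((?b + s)\<^sup>2 + q) \<le> sqrt (c\<^sup>2)" by (rule real_sqrt_le_mono)
        then show ?thesis using c by simp
      qed
      have "G (?b + t) = ?b + t" unfolding G_def using G_id q c bnd[of t] tz by blast
      moreover have "G (?b + t) \<le> G (a + t)" using False tz zc c by (intro Gmono) auto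
      moreover have "G (?b + - t) = ?b + - t" unfolding G_def using G_id q c bnd[of "-t"] tz by force
      moreover have "G (?b + - t) \<le> G (a - t)" using False tz zc c by (intro Gmono) auto
      ultimately show ?thesis using False by simp
    qed
    show ?thesis
    proof
      show "inner u (clip (u + z) c) + inner u (clip (u - z) c) \<ge> 0"
        unfolding ep em using Gsum a by (simp add: distrib_left[symmetric])
      show "norm z < c / 4 \<longrightarrow> inner u (clip (u + z) c) + inner u (clip (u - z) c) \<ge> 2 * norm u * min (norm u) (3/4 * c)"
      proof
        assume "norm z < c / 4"
        then have "a * (G (a + t) + G (a - t)) \<ge> a * (2 * min a (3/4 * c))"
          using bound a by (intro mult_left_mono) auto
        then show "inner u (clip (u + z) c) + inner u (clip (u - z) c) \<ge> 2 * norm u * min (norm u) (3/4 * c)"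
          unfolding ep em a_def[symmetric] by (simp add: distrib_left mult.left_commute)
      qed
    qed
  qed
  then show "inner u (clip (u + z) c) + inner u (clip (u - z) c) \<ge> 0"
    and "norm z < c / 4 \<Longrightarrow> inner u (clip (u + z) c) + inner u (clip (u - z) c) \<ge> 2 * norm u * min (norm u) (3/4 * c)"
    by auto
qed



lemma isometry_distr:
  fixes H :: "'a::euclidean_space \<Rightarrow> 'a"
  assumes lin: "linear H" and inv: "\<And>x. H (H x) = x" and nrm: "\<And>x. norm (H x) = norm x"
  shows "distr lborel borel H = lborel"
proof -
  have HC: "continuous_on UNIV H"
    using lin linear_continuous_on linear_conv_bounded_linear by blast
  have Hm[measurable]: "H \<in> borel_measurable borel"
    using HC borel_measurable_continuous_onI by blast
  have Hiv: "H ` X = H -` X" for X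
  proof
    show "H ` X \<subseteq> H -` X" using inv by auto
    show "H -` X \<subseteq> H ` X"
    proof
      fix x assume "x \<in> H -` X"
      then have "H x \<in> X" by simp
      then show "x \<in> H ` X" using inv[of x] by (metis image_eqI)
    qed
  qed
  have eqo: "emeasure (distr lborel borel H) X = emeasure lborel X" if "open X" for X
  proof -
    have "X \<in> sets borel" using that by simp
    then have "emeasure (distr lborel borel H) X = emeasure lborel (H -` X)"
      by (subst emeasure_distr) auto
    also have "\<dots> = emeasure lborel X" unfolding Hiv[symmetric]
      by (rule isometry_emeasure_open[OF lin inv nrm that])
    finally show ?thesis .
  qed
  show ?thesis
  proof (rule measure_eqI_generator_eq[where \<Omega>=UNIV and E="{S. open S}" and A="\<lambda>i. ball 0 (real i)"])
    show "Int_stable {S :: 'a set. open S}" by (auto simp: Int_stable_def)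
    show "{S :: 'a set. open S} \<subseteq> Pow UNIV" by simp
    show "\<And>X. X \<in> {S. open S} \<Longrightarrow> emeasure (distr lborel borel H) X = emeasure lborel X"
      using eqo by simp
    show "sets (distr lborel borel H) = sigma_sets UNIV {S. open S}" by (simp add: borel_def)
    show "sets lborel = sigma_sets UNIV {S :: 'a set. open S}" by (simp add: borel_def)
    show "range (\<lambda>i. ball (0::'a) (real i)) \<subseteq> {S. open S}" by auto
    show "(\<Union>i. ball (0::'a) (real i)) = UNIV"
      by (auto simp: dist_norm) (meson real_arch_simple le_less_trans lt_ex order.strict_trans1 reals_Archimedean2)
    show "emeasure (distr lborel borel H) (ball 0 (real i)) \<noteq> \<infinity>" for i
      using eqo[of "ball 0 (real i)"] emeasure_lborel_ball_finite[of "0::'a" "real i"] by simp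
  qed
qed

lemma isometry_integral:
  fixes H :: "'a::euclidean_space \<Rightarrow> 'a" and f :: "'a \<Rightarrow> real"
  assumes lin: "linear H" and inv: "\<And>x. H (H x) = x" and nrm: "\<And>x. norm (H x) = norm x"
    and f: "f \<in> borel_measurable borel"
  shows "(\<integral>x. f (H x) \<partial>lborel) = (\<integral>x. f x \<partial>lborel)"
proof -
  have HC: "continuous_on UNIV H"
    using lin linear_continuous_on linear_conv_bounded_linear by blast
  have Hm: "H \<in> borel_measurable borel"
    using HC borel_measurable_continuous_onI by blast
  have "(\<integral>x. f x \<partial>lborel) = (\<integral>x. f x \<partial>(distr lborel borel H))"
    by (simp add: isometry_distr[OF lin inv nrm])
  also have "\<dots> = (\<integral>x. f (H x) \<partial>lborel)"
    using Hm f by (intro integral_distr) auto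
  finally show ?thesis by simp
qed

lemma translate_integral:
  fixes t :: "'a::euclidean_space" and f :: "'a \<Rightarrow> real"
  assumes f: "f \<in> borel_measurable borel"
  shows "(\<integral>x. f (t + x) \<partial>lborel) = (\<integral>x. f x \<partial>lborel)"
proof -
  have "(\<integral>x. f x \<partial>lborel) = (\<integral>x. f x \<partial>(distr lborel borel ((+) t)))"
    by (simp add: lborel_distr_plus)
  also have "\<dots> = (\<integral>x. f (t + x) \<partial>lborel)"
    using f by (intro integral_distr) auto
  finally show ?thesis by simp
qed

lemma translate_integrable:
  fixes t :: "'a::euclidean_space" and f :: "'a \<Rightarrow> real"
  assumes f: "f \<in> borel_measurable borel"
  shows "integrable lborel (\<lambda>x. f (t + x)) \<longleftrightarrow> integrable lborel f"
proof -
  have "integrable lborel f \<longleftrightarrow> integrable (distr lborel borel ((+) t)) f"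
    by (simp add: lborel_distr_plus)
  also have "\<dots> \<longleftrightarrow> integrable lborel (\<lambda>x. f (t + x))"
    using f by (intro integrable_distr_eq) auto
  finally show ?thesis by simp
qed

lemma clip_measurable[measurable]: "(\<lambda>y::'a::euclidean_space. clip y c) \<in> borel_measurable borel"
  unfolding clip_def by measurable

lemma norm_clip: assumes "c > 0" shows "norm (clip y c) \<le> c"
proof (cases "y = 0")
  case True then show ?thesis using assms by (simp add: clip_def)
next
  case False
  then have "norm (clip y c) = min 1 (c / norm y) * norm y" using assms by (simp add: clip_def)
  also have "\<dots> \<le> (c / norm y) * norm y" by (intro mult_right_mono) auto
  also have "\<dots> = c" using False by simp
  finally show ?thesis .
qed

lemma clip_uminus: "clip (- y) c = - clip y c"
  by (simp add: clip_def)



lemma integrable_pbound: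
  fixes p :: "'a::euclidean_space \<Rightarrow> real" and g :: "'a \<Rightarrow> real"
  assumes pint: "integrable lborel p" and pnn: "\<And>y. p y \<ge> 0"
    and g: "g \<in> borel_measurable borel" and gb: "\<And>y. \<bar>g y\<bar> \<le> B"
  shows "integrable lborel (\<lambda>y. p y * g y)"
proof (rule Bochner_Integration.integrable_bound[where f="\<lambda>y. B * p y"])
  show "integrable lborel (\<lambda>y. B * p y)" using pint by simp
  show "(\<lambda>y. p y * g y) \<in> borel_measurable lborel"
    using g borel_measurable_integrable[OF pint] by simp
  show "AE y in lborel. norm (p y * g y) \<le> norm (B * p y)"
  proof (rule AE_I2)
    fix y
    have "norm (p y * g y) = p y * \<bar>g y\<bar>" using pnn[of y] by (simp add: abs_mult)
    also have "\<dots> \<le> p y * B" using pnn[of y] gb[of y] by (intro mult_left_mono) auto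
    also have "\<dots> \<le> norm (B * p y)" by (metis abs_ge_self mult.commute real_norm_def)
    finally show "norm (p y * g y) \<le> norm (B * p y)" .
  qed
qed

lemma inner_clip_bound:
  assumes "c > 0" shows "\<bar>inner w (clip y c)\<bar> \<le> norm w * c"
proof -
  have "\<bar>inner w (clip y c)\<bar> \<le> norm w * norm (clip y c)" by (rule Cauchy_Schwarz_ineq2)
  also have "\<dots> \<le> norm w * c" using norm_clip[OF assms] by (intro mult_left_mono) auto
  finally show ?thesis .
qed

lemma single:
  fixes c :: real and v u :: "'a::euclidean_space" and p :: "'a \<Rightarrow> real" and \<phi> :: "real \<Rightarrow> real"
  assumes c: "c > 0"
    and pm: "p \<in> borel_measurable lborel"
    and pnn: "\<And>y. p y \<ge> 0"
    and p1: "(\<integral>\<^sup>+ y. ennreal (p y) \<partial>lborel) = 1"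
    and prad: "\<And>y. p y = \<phi> (norm (y - u))"
    and uv: "inner u v \<ge> 0"
  shows "(\<integral>y. p y * inner v (clip y c) \<partial>lborel) \<ge>
     norm v * min (norm u) (3/4 * c) * vcos v u *
       measure (density lborel (\<lambda>y. ennreal (p y))) {y. norm (y - u) < c / 4}"
proof -
  have pmb[measurable]: "p \<in> borel_measurable borel" using pm by simp
  have pint: "integrable lborel p"
    using pmb pnn p1 by (intro integrableI_nonneg) auto
  define J where "J w = (\<integral>y. p y * inner w (clip y c) \<partial>lborel)" for w
  define m where "m = min (norm u) (3/4 * c)"
  define A where "A = {y. norm (y - u) < c / 4}"
  define P where "P = measure (density lborel (\<lambda>y. ennreal (p y))) A"
  have Aball: "A = ball u (c/4)" by (auto simp: A_def dist_norm norm_minus_commute)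
  have Am[measurable]: "A \<in> sets borel" unfolding Aball by simp
  have intJ: "integrable lborel (\<lambda>y. p y * inner w (clip y (c::real)))" for w
    by (rule integrable_pbound[OF pint pnn _ inner_clip_bound[OF c]]) measurable
  have intJ2: "integrable lborel (\<lambda>y. p y * inner w (clip (t - y) (c::real)))" for w t
    by (rule integrable_pbound[OF pint pnn _ inner_clip_bound[OF c]]) measurable
  have JP: "J w = (\<integral>y. p y * inner w (clip (2 *\<^sub>R u - y) c) \<partial>lborel)" for w
  proof -
    define f where "f y = p y * inner w (clip y c)" for y
    have fm: "f \<in> borel_measurable borel" unfolding f_def by measurable
    have lin: "linear (uminus :: 'a \<Rightarrow> 'a)" by (rule linear_uminus)
    have "J w = (\<integral>y. f y \<partial>lborel)" by (simp add: J_def f_def)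
    also have "\<dots> = (\<integral>y. f (2 *\<^sub>R u + y) \<partial>lborel)" using fm by (simp add: translate_integral)
    also have "\<dots> = (\<integral>y. f (2 *\<^sub>R u + - y) \<partial>lborel)"
      using isometry_integral[OF lin, of "\<lambda>y. f (2 *\<^sub>R u + y)"] fm by simp
    also have "\<dots> = (\<integral>y. p y * inner w (clip (2 *\<^sub>R u - y) c) \<partial>lborel)"
    proof (intro Bochner_Integration.integral_cong refl)
      fix y
      have "p (2 *\<^sub>R u + - y) = p y" unfolding prad
        by (simp add: scaleR_2 norm_minus_commute algebra_simps)
      then show "f (2 *\<^sub>R u + - y) = p y * inner w (clip (2 *\<^sub>R u - y) c)" by (simp add: f_def)
    qed
    finally show ?thesis .
  qed
  have J2: "2 * J w = (\<integral>y. p y * (inner w (clip y c) + inner w (clip (2 *\<^sub>R u - y) c)) \<partial>lborel)" for w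
  proof -
    have "2 * J w = J w + (\<integral>y. p y * inner w (clip (2 *\<^sub>R u - y) c) \<partial>lborel)" using JP[of w] by simp
    also have "\<dots> = (\<integral>y. p y * inner w (clip y c) + p y * inner w (clip (2 *\<^sub>R u - y) c) \<partial>lborel)"
      unfolding J_def by (rule Bochner_Integration.integral_add[symmetric, OF intJ intJ2])
    finally show ?thesis by (simp add: distrib_left)
  qed
  have Pint: "P = (\<integral>y. p y * indicator A y \<partial>lborel)"
  proof -
    have intA: "integrable lborel (\<lambda>y. p y * indicator A y)"
      by (rule integrable_pbound[OF pint pnn, where B=1]) (auto split: split_indicator)
    have "emeasure (density lborel (\<lambda>y. ennreal (p y))) A = (\<integral>\<^sup>+ y. ennreal (p y) * indicator A y \<partial>lborel)"
      by (rule emeasure_density) auto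
    also have "\<dots> = (\<integral>\<^sup>+ y. ennreal (p y * indicator A y) \<partial>lborel)"
      by (intro nn_integral_cong) (simp split: split_indicator)
    also have "\<dots> = ennreal (\<integral>y. p y * indicator A y \<partial>lborel)"
      using intA pnn by (intro nn_integral_eq_integral) (auto split: split_indicator)
    finally show ?thesis unfolding P_def measure_def using pnn
      by (simp add: integral_nonneg_AE split: split_indicator)
  qed
  have JU: "J u \<ge> norm u * m * P"
  proof -
    have "(\<integral>y. p y * (2 * norm u * m * indicator A y) \<partial>lborel) = (\<integral>y. (2 * norm u * m) * (p y * indicator A y) \<partial>lborel)"
      by (simp add: mult_ac)
    also have "\<dots> = (2 * norm u * m) * P" unfolding Pint by (rule integral_mult_right_zero)
    finally have "2 * (norm u * m * P) = (\<integral>y. p y * (2 * norm u * m * indicator A y) \<partial>lborel)"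
      by simp
    also have "\<dots> \<le> (\<integral>y. p y * (inner u (clip y c) + inner u (clip (2 *\<^sub>R u - y) c)) \<partial>lborel)"
    proof (rule integral_mono)
      show "integrable lborel (\<lambda>y. p y * (2 * norm u * m * indicator A y))"
        using integrable_pbound[OF pint pnn, of "\<lambda>y. 2 * norm u * m * indicator A y" "2 * norm u * m"]
        unfolding m_def using c by (auto split: split_indicator)
      show "integrable lborel (\<lambda>y. p y * (inner u (clip y c) + inner u (clip (2 *\<^sub>R u - y) c)))"
        using Bochner_Integration.integrable_add[OF intJ[of u] intJ2[of u "2 *\<^sub>R u"]]
        by (simp add: distrib_left)
      fix y
      have e1: "u + (y - u) = y" by simp
      have e2: "u - (y - u) = 2 *\<^sub>R u - y" by (simp add: scaleR_2 algebra_simps)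
      have "2 * norm u * m * indicator A y \<le> inner u (clip y c) + inner u (clip (2 *\<^sub>R u - y) c)"
      proof (cases "y \<in> A")
        case True
        then have "norm (y - u) < c / 4" by (simp add: A_def)
        from pair_bound(2)[OF c this, of u] show ?thesis using True
          unfolding e1 e2 by (simp add: m_def)
      next
        case False
        from pair_bound(1)[OF c, of u "y - u"] show ?thesis using False
          unfolding e1 e2 by simp
      qed
      then show "p y * (2 * norm u * m * indicator A y) \<le> p y * (inner u (clip y c) + inner u (clip (2 *\<^sub>R u - y) c))"
        using pnn[of y] by (intro mult_left_mono)
    qed
    also have "\<dots> = 2 * J u" using J2[of u] by simp
    finally show ?thesis by simp
  qed
  have Jlin: "J (a *\<^sub>R w) = a * J w" for a w
    unfolding J_def by (simp add: mult.left_commute)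
  have Jadd: "J (w1 + w2) = J w1 + J w2" for w1 w2
    unfolding J_def by (simp add: inner_add_left distrib_left Bochner_Integration.integral_add[OF intJ intJ])
  have goal_eq: "?thesis \<longleftrightarrow> J v \<ge> norm v * m * vcos v u * P"
    by (simp add: J_def m_def P_def A_def)
  show ?thesis
  proof (cases "u = 0 \<or> v = 0")
    case True
    have "J v = 0"
    proof (cases "v = 0")
      case True then show ?thesis by (simp add: J_def)
    next
      case False
      with \<open>u = 0 \<or> v = 0\<close> have u0: "u = 0" by simp
      have "J v = (\<integral>y. p y * inner v (clip (- y) c) \<partial>lborel)" using JP[of v] u0 by simp
      also have "\<dots> = - J v" by (simp add: clip_uminus J_def)
      finally show ?thesis by simp
    qed
    moreover have "vcos v u = 0" using True by (auto simp: vcos_def)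
    ultimately show ?thesis unfolding goal_eq by simp
  next
    case False
    then have u0: "u \<noteq> 0" and v0: "v \<noteq> 0" by auto
    have nu: "norm u > 0" using u0 by simp
    define e where "e = (1 / norm u) *\<^sub>R u"
    have ee: "inner e e = 1" using nu
      by (simp add: e_def power2_norm_eq_inner[symmetric] power2_eq_square)
    have ue: "u = norm u *\<^sub>R e" using nu by (simp add: e_def)
    define H where "H x = (2 * inner x e) *\<^sub>R e - x" for x
    have HeI: "inner (H x) e = inner x e" for x by (simp add: H_def inner_diff_left ee)
    have lin: "linear H"
      by (rule linearI) (simp_all add: H_def inner_add_left scaleR_add_left algebra_simps)
    have inv: "H (H x) = x" for x
    proof -
      have "H (H x) = (2 * inner x e) *\<^sub>R e - H x" by (simp add: H_def[of "H x"] HeI)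
      then show ?thesis by (simp add: H_def)
    qed
    have sym: "inner w (H x) = inner (H w) x" for w x
      by (simp add: H_def inner_diff_left inner_diff_right inner_commute)
    have nrm: "norm (H x) = norm x" for x
    proof -
      have "inner (H x) (H x) = inner (H (H x)) x" by (rule sym)
      then have "inner (H x) (H x) = inner x x" by (simp add: inv)
      then show ?thesis by (simp add: norm_eq_sqrt_inner)
    qed
    have Hu: "H u = u"
    proof -
      have "H u = norm u *\<^sub>R H e" by (subst ue) (simp add: linear_cmul[OF lin])
      also have "H e = e" by (simp add: H_def ee scaleR_2)
      finally show ?thesis using ue by simp
    qed
    have Hscale: "H (a *\<^sub>R x) = a *\<^sub>R H x" for a x by (rule linear_cmul[OF lin])
    have clipH: "clip (H y) c = H (clip y c)" for y
    proof (cases "y = 0")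
      case True
      then show ?thesis using linear_0[OF lin] by (simp add: clip_def)
    next
      case False
      then have "H y \<noteq> 0" by (metis inv linear_0[OF lin])
      then show ?thesis using False by (simp add: clip_def nrm Hscale)
    qed
    have pH: "p (H y) = p y" for y
    proof -
      have "H y - u = H (y - u)" using Hu by (simp add: linear_diff[OF lin])
      then show ?thesis by (simp add: prad nrm)
    qed
    have HJ: "J v = J (H v)"
    proof -
      define f where "f y = p y * inner v (clip y c)" for y
      have fm: "f \<in> borel_measurable borel" unfolding f_def by measurable
      have "J v = (\<integral>y. f y \<partial>lborel)" by (simp add: J_def f_def)
      also have "\<dots> = (\<integral>y. f (H y) \<partial>lborel)" using isometry_integral[OF lin inv nrm fm] by simp
      also have "\<dots> = J (H v)" unfolding J_def f_def by (simp add: pH clipH sym)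
      finally show ?thesis .
    qed
    have vHv: "v + H v = (2 * inner v e / norm u) *\<^sub>R u"
      using nu by (simp add: H_def e_def)
    have "2 * J v = J v + J (H v)" using HJ by simp
    also have "\<dots> = J (v + H v)" by (simp add: Jadd)
    also have "\<dots> = (2 * inner v e / norm u) * J u" by (simp add: vHv Jlin)
    finally have Jv: "J v = (inner v e / norm u) * J u" by simp
    have ve: "inner v e = inner u v / norm u" by (simp add: e_def inner_commute)
    have ve0: "inner v e \<ge> 0" using ve uv nu by simp
    have ve2: "inner v e = norm v * vcos v u" using u0 v0 ve
      by (simp add: vcos_def inner_commute)
    have "(inner v e / norm u) * (norm u * m * P) \<le> (inner v e / norm u) * J u"
      using JU ve0 nu by (intro mult_left_mono) auto
    moreover have "(inner v e / norm u) * (norm u * m * P) = inner v e * m * P" using nu by simp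
    ultimately have "inner v e * m * P \<le> (inner v e / norm u) * J u" by simp
    then show ?thesis unfolding goal_eq Jv ve2 by (simp add: mult_ac)
  qed
qed



lemma vcos_nonneg: "inner u v \<ge> 0 \<Longrightarrow> vcos v u \<ge> 0"
  by (simp add: vcos_def inner_commute)

theorem theorem3:
  fixes c :: real and v :: "'a::euclidean_space" and m :: nat
    and u :: "nat \<Rightarrow> 'a" and p :: "nat \<Rightarrow> 'a \<Rightarrow> real"
    and \<phi> :: "nat \<Rightarrow> real \<Rightarrow> real" and w :: "nat \<Rightarrow> real"
  assumes c_pos: "c > 0"
    and p_meas: "\<And>i. i < m \<Longrightarrow> p i \<in> borel_measurable lborel"
    and p_nonneg: "\<And>i y. i < m \<Longrightarrow> p i y \<ge> 0"
    and p_int1: "\<And>i. i < m \<Longrightarrow> (\<integral>\<^sup>+ y. ennreal (p i y) \<partial>lborel) = 1"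
    and p_radial: "\<And>i y. i < m \<Longrightarrow> p i y = \<phi> i (norm (y - u i))"
    and w_nonneg: "\<And>i. i < m \<Longrightarrow> w i \<ge> 0"
    and w_sum: "(\<Sum>i<m. w i) = 1"
    and v_eq: "v = (\<Sum>i<m. w i *\<^sub>R u i)"
    and inner_nonneg: "\<And>i. i < m \<Longrightarrow> inner (u i) v \<ge> 0"
  shows "(\<integral>\<xi>. (\<Sum>i<m. w i * p i (\<xi> + v)) * inner v (clip (v + \<xi>) c) \<partial>lborel)
           \<ge> norm v * (\<Sum>i<m. w i * min (norm (u i)) (3/4 * c) * vcos v (u i) *
                 measure (density lborel (\<lambda>y. ennreal (p i y))) {y. norm (y - u i) < c / 4})
       \<and> norm v * (\<Sum>i<m. w i * min (norm (u i)) (3/4 * c) * vcos v (u i) *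
                 measure (density lborel (\<lambda>y. ennreal (p i y))) {y. norm (y - u i) < c / 4}) \<ge> 0"
proof -
  define T where "T i = norm v * min (norm (u i)) (3/4 * c) * vcos v (u i) *
                 measure (density lborel (\<lambda>y. ennreal (p i y))) {y. norm (y - u i) < c / 4}" for i
  define I where "I i = (\<integral>y. p i y * inner v (clip y c) \<partial>lborel)" for i
  have shift: "integrable lborel (\<lambda>\<xi>. p i (\<xi> + v) * inner v (clip (v + \<xi>) c))
     \<and> (\<integral>\<xi>. p i (\<xi> + v) * inner v (clip (v + \<xi>) c) \<partial>lborel) = I i" if i: "i < m" for i
  proof -
    define f where "f y = p i y * inner v (clip y c)" for y
    have pm[measurable]: "p i \<in> borel_measurable borel" using p_meas[OF i] by simp
    have fm: "f \<in> borel_measurable borel" unfolding f_def by measurable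
    have pint: "integrable lborel (p i)"
      using pm p_nonneg[OF i] p_int1[OF i] by (intro integrableI_nonneg) auto
    have fint: "integrable lborel f"
      unfolding f_def
      by (rule integrable_pbound[OF pint p_nonneg[OF i] _ inner_clip_bound[OF c_pos]]) measurable
    have eq: "(\<lambda>\<xi>. p i (\<xi> + v) * inner v (clip (v + \<xi>) c)) = (\<lambda>\<xi>. f (v + \<xi>))"
      by (simp add: f_def add.commute)
    show ?thesis unfolding eq
      using translate_integrable[OF fm, of v] translate_integral[OF fm, of v] fint
      by (simp add: I_def f_def)
  qed
  have "(\<integral>\<xi>. (\<Sum>i<m. w i * p i (\<xi> + v)) * inner v (clip (v + \<xi>) c) \<partial>lborel)
      = (\<integral>\<xi>. (\<Sum>i<m. w i * (p i (\<xi> + v) * inner v (clip (v + \<xi>) c))) \<partial>lborel)"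
    by (simp add: sum_distrib_right mult.assoc)
  also have "\<dots> = (\<Sum>i<m. (\<integral>\<xi>. w i * (p i (\<xi> + v) * inner v (clip (v + \<xi>) c)) \<partial>lborel))"
    by (rule Bochner_Integration.integral_sum) (use shift in auto)
  also have "\<dots> = (\<Sum>i<m. w i * I i)"
    by (rule sum.cong) (use shift in auto)
  finally have L: "(\<integral>\<xi>. (\<Sum>i<m. w i * p i (\<xi> + v)) * inner v (clip (v + \<xi>) c) \<partial>lborel) = (\<Sum>i<m. w i * I i)" .
  have R: "norm v * (\<Sum>i<m. w i * min (norm (u i)) (3/4 * c) * vcos v (u i) *
                 measure (density lborel (\<lambda>y. ennreal (p i y))) {y. norm (y - u i) < c / 4})
        = (\<Sum>i<m. w i * T i)"
    by (simp add: sum_distrib_left T_def mult_ac)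
  have TI: "T i \<le> I i" if i: "i < m" for i
    unfolding T_def I_def
    by (rule single[OF c_pos p_meas[OF i] p_nonneg[OF i] p_int1[OF i] p_radial[OF i] inner_nonneg[OF i]])
  have T0: "T i \<ge> 0" if i: "i < m" for i
    unfolding T_def using c_pos vcos_nonneg[OF inner_nonneg[OF i]]
    by (intro mult_nonneg_nonneg) auto
  show ?thesis
  proof
    show "(\<integral>\<xi>. (\<Sum>i<m. w i * p i (\<xi> + v)) * inner v (clip (v + \<xi>) c) \<partial>lborel)
           \<ge> norm v * (\<Sum>i<m. w i * min (norm (u i)) (3/4 * c) * vcos v (u i) *
                 measure (density lborel (\<lambda>y. ennreal (p i y))) {y. norm (y - u i) < c / 4})"
      unfolding L R using TI w_nonneg by (intro sum_mono mult_left_mono) auto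
    show "norm v * (\<Sum>i<m. w i * min (norm (u i)) (3/4 * c) * vcos v (u i) *
                 measure (density lborel (\<lambda>y. ennreal (p i y))) {y. norm (y - u i) < c / 4}) \<ge> 0"
      unfolding R using T0 w_nonneg by (intro sum_nonneg mult_nonneg_nonneg) auto
  qed
qed

end
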